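(* Let $(K,D,v)$ be a VD-field such that $(K,v)$ is spherically complete and the residue field $Kv$ is linearly $D$-closed. Let $f\in\mathcal{O}[X_0,X_1,\dots,X_n]$ and assume there is $b\in\mathcal{O}$ such that $$\gamma:=\min_{0\le i\le n} v\frac{\partial f}{\partial X_i}(b,Db,\dots,D^nb)<\infty\quad\text{and}\quad vf(b,Db,\dots,D^nb)>2\gamma.$$ Then there is $a\in K$ such that $f(a,Da,\dots,D^na)=0$ and $v(a-b)>\gamma$.
   Context: $(K,v)$ is a valued field with valuation ring $\mathcal{O}=\{y:vy\ge0\}$, valuation ideal $\mathcal{M}=\{y:vy>0\}$, residue field $Kv=\mathcal{O}/\mathcal{M}$, value group $vK$. $(K,v)$ is spherically complete if the ultrametric space $(K,u)$ with $u(a,b)=v(a-b)$ is spherically complete, i.e. every family of balls $\{x: v(x-c)\ge\alpha\}$ (or unions of such with a common point) totally ordered by inclusion has non-empty intersection. A VD-field is a valued field $(K,v)$ with an additive map $D:K\to K$ such that: (VDF1) $vDa\ge va$ for all $a\in K$; (VDF2) $vK=\{va\mid a\in K,\ vDa>va\}$; (VDF3) there is $e\in\mathcal{O}$ with $D(ab)=aDb+bDa+e(Da)(Db)$ for all $a,b\in K$. By (VDF1), $D$ induces an additive map on $Kv$, again denoted $D$, with $D(av)=(Da)v$ for $a\in\mathcal{O}$. $D^i$ denotes the $i$-th iterate ($D^0=\mathrm{id}$). $Kv$ is linearly $D$-closed if every operator $\sum_{i=0}^n c_iD^i$ with $c_i\in Kv$ is surjective on $Kv$. *)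

theory Defs
  imports Main "HOL-Library.Extended"
begin

definition valuation :: "('a::field \<Rightarrow> 'g::linordered_ab_group_add extended) \<Rightarrow> bool" where
  "valuation v \<longleftrightarrow>
     (\<forall>x. v x = Pinf \<longleftrightarrow> x = 0) \<and>
     (\<forall>x. v x \<noteq> Minf) \<and>
     (\<forall>x y. v (x * y) = v x + v y) \<and>
     (\<forall>x y. min (v x) (v y) \<le> v (x + y))"

definition vball :: "('a::field \<Rightarrow> 'g::linordered_ab_group_add extended) \<Rightarrow> 'a \<Rightarrow> 'g \<Rightarrow> 'a set" where
  "vball v c \<alpha> = {x. Fin \<alpha> \<le> v (x - c)}"

definition spherically_complete :: "('a::field \<Rightarrow> 'g::linordered_ab_group_add extended) \<Rightarrow> bool" where
  "spherically_complete v \<longleftrightarrow>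
     (\<forall>\<B>. \<B> \<noteq> {} \<longrightarrow> (\<forall>B\<in>\<B>. \<exists>c \<alpha>. B = vball v c \<alpha>) \<longrightarrow>
        (\<forall>B1\<in>\<B>. \<forall>B2\<in>\<B>. B1 \<subseteq> B2 \<or> B2 \<subseteq> B1) \<longrightarrow> \<Inter>\<B> \<noteq> {})"

definition VD_field :: "('a::field \<Rightarrow> 'g::linordered_ab_group_add extended) \<Rightarrow> ('a \<Rightarrow> 'a) \<Rightarrow> bool" where
  "VD_field v D \<longleftrightarrow>
     valuation v \<and>
     (\<forall>a b. D (a + b) = D a + D b) \<and>
     (\<forall>a. v a \<le> v (D a)) \<and>
     {v a | a. v a < v (D a)} = {v a | a. a \<noteq> 0} \<and>
     (\<exists>e. 0 \<le> v e \<and> (\<forall>a b. D (a * b) = a * D b + b * D a + e * D a * D b))"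

text \<open>The residue field Kv = O/M is linearly D-closed: every nonzero operator
  sum c_i D^i (c_i in Kv) is surjective on Kv. Written out on representatives:
  residues of c_i are given by c_i in O, not all in M; an element d of Kv by d in O;
  equality in Kv means the difference lies in M.\<close>
definition residue_linearly_D_closed :: "('a::field \<Rightarrow> 'g::linordered_ab_group_add extended) \<Rightarrow> ('a \<Rightarrow> 'a) \<Rightarrow> bool" where
  "residue_linearly_D_closed v D \<longleftrightarrow>
     (\<forall>(n::nat) (c::nat \<Rightarrow> 'a) d.
        (\<forall>i\<le>n. 0 \<le> v (c i)) \<longrightarrow> (\<exists>i\<le>n. v (c i) = 0) \<longrightarrow> 0 \<le> v d \<longrightarrow>
        (\<exists>a. 0 \<le> v a \<and> 0 < v ((\<Sum>i\<le>n. c i * (D ^^ i) a) - d)))"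

text \<open>Multivariate polynomials in the variables X_0,...,X_n: coefficient functions
  on exponent vectors (nat \<Rightarrow> nat) with finite support, monomials only in X_0..X_n.\<close>
definition is_mpoly :: "nat \<Rightarrow> ((nat \<Rightarrow> nat) \<Rightarrow> 'a::field) \<Rightarrow> bool" where
  "is_mpoly n f \<longleftrightarrow> finite {m. f m \<noteq> 0} \<and> (\<forall>m. f m \<noteq> 0 \<longrightarrow> (\<forall>i>n. m i = 0))"

definition mpoly_eval :: "nat \<Rightarrow> ((nat \<Rightarrow> nat) \<Rightarrow> 'a::field) \<Rightarrow> (nat \<Rightarrow> 'a) \<Rightarrow> 'a" where
  "mpoly_eval n f x = (\<Sum>m\<in>{m. f m \<noteq> 0}. f m * (\<Prod>i\<le>n. x i ^ m i))"

definition mpoly_pderiv :: "nat \<Rightarrow> ((nat \<Rightarrow> nat) \<Rightarrow> 'a::field) \<Rightarrow> ((nat \<Rightarrow> nat) \<Rightarrow> 'a)" where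
  "mpoly_pderiv j f = (\<lambda>m. of_nat (Suc (m j)) * f (m(j := Suc (m j))))"

end

theory Submission
  imports Defs
begin

lemma ext_add_nonneg: "0 \<le> (s::'g::linordered_ab_group_add extended) \<Longrightarrow> r \<le> r + s"
  using add_left_mono[of 0 s r] by simp

locale vdf =
  fixes v :: "'a::field \<Rightarrow> 'g::linordered_ab_group_add extended" and D :: "'a \<Rightarrow> 'a" and e :: 'a
  assumes val: "valuation v"
    and Dadd: "\<And>a b. D (a + b) = D a + D b"
    and vD: "\<And>a. v a \<le> v (D a)"
    and e0: "0 \<le> v e"
    and Dmul: "\<And>a b. D (a * b) = a * D b + b * D a + e * D a * D b"
begin

lemma vPinf[simp]: "v x = Pinf \<longleftrightarrow> x = 0" using val unfolding valuation_def by blast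
lemma v0[simp]: "v 0 = Pinf" by simp
lemma vnMinf[simp]: "v x \<noteq> Minf" using val unfolding valuation_def by blast
lemma vmul: "v (x * y) = v x + v y" using val unfolding valuation_def by blast
lemma vadd: "min (v x) (v y) \<le> v (x + y)" using val unfolding valuation_def by blast

lemma fin_cases: obtains z where "v x = Fin z" | "x = 0"
  by (cases "v x") auto

lemma v1[simp]: "v 1 = 0"
proof -
  have "v 1 = v 1 + v 1" using vmul[of 1 1] by simp
  moreover obtain z where "v 1 = Fin z" using fin_cases[of 1] by auto
  ultimately show ?thesis by (simp add: zero_extended_def)
qed

lemma vm1[simp]: "v (-1) = 0"
proof -
  have "v 1 = v (-1) + v (-1)" using vmul[of "-1" "-1"] by simp
  moreover obtain z where z: "v (-1) = Fin z" using fin_cases[of "-1"] by auto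
  ultimately have "z + z = 0" by (simp add: zero_extended_def)
  hence "z = 0"
    using add_pos_pos[of z z] add_neg_neg[of z z] by (metis less_irrefl linorder_neqE)
  thus ?thesis using z by (simp add: zero_extended_def)
qed

lemma vneg[simp]: "v (- x) = v x"
  using vmul[of "-1" x] by simp

lemma vge_add: "r \<le> v x \<Longrightarrow> r \<le> v y \<Longrightarrow> r \<le> v (x + y)"
  using vadd[of x y] by (meson min.bounded_iff order_trans)
lemma vge_diff: "r \<le> v x \<Longrightarrow> r \<le> v y \<Longrightarrow> r \<le> v (x - y)"
  using vge_add[of r x "-y"] by simp
lemma vgt_add: "r < v x \<Longrightarrow> r < v y \<Longrightarrow> r < v (x + y)"
  using vadd[of x y] by (metis min_less_iff_conj order_less_le_trans)
lemma vgt_diff: "r < v x \<Longrightarrow> r < v y \<Longrightarrow> r < v (x - y)"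
  using vgt_add[of r x "-y"] by simp
lemma vge_mul: "r \<le> v x \<Longrightarrow> s \<le> v y \<Longrightarrow> r + s \<le> v (x * y)"
  by (simp add: vmul add_mono)
lemma vdiff_sym: "v (x - y) = v (y - x)"
  by (metis minus_diff_eq vneg)

lemma vadd_eq: assumes "v x < v y" shows "v (x + y) = v x"
proof -
  have "v x \<le> v (x + y)" using vadd[of x y] assms by simp
  moreover have "min (v (x+y)) (v (-y)) \<le> v x" using vadd[of "x+y" "-y"] by simp
  ultimately show ?thesis using assms by (auto simp: min_def split: if_splits)
qed

lemma vge_sum: "(\<And>i. i \<in> S \<Longrightarrow> r \<le> v (f i)) \<Longrightarrow> r \<le> v (sum f S)"
  by (induction S rule: infinite_finite_induct) (auto intro: vge_add)
lemma vgt_sum: "r \<noteq> Pinf \<Longrightarrow> (\<And>i. i \<in> S \<Longrightarrow> r < v (f i)) \<Longrightarrow> r < v (sum f S)"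
proof (induction S rule: infinite_finite_induct)
  case (infinite A) then show ?case by (cases r) auto
next
  case empty then show ?case by (cases r) auto
next
  case (insert x F) then show ?case by (auto intro: vgt_add)
qed

lemma vge_mul0: "0 \<le> v x \<Longrightarrow> 0 \<le> v y \<Longrightarrow> 0 \<le> v (x * y)"
  using vge_mul[of 0 x 0 y] by simp
lemma vprod_ge0: "(\<And>i. i \<in> S \<Longrightarrow> 0 \<le> v (f i)) \<Longrightarrow> 0 \<le> v (prod f S)"
  by (induction S rule: infinite_finite_induct) (auto intro: vge_mul0)
lemma vpow_ge0: "0 \<le> v x \<Longrightarrow> 0 \<le> v (x ^ k)"
  by (induction k) (auto intro: vge_mul0)
lemma vnat_ge0: "0 \<le> v (of_nat k)"
  by (induction k) (auto intro: vge_add)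


lemma vge_mulO: "r \<le> v x \<Longrightarrow> 0 \<le> v y \<Longrightarrow> r \<le> v (x * y)"
  using vge_mul[of r x 0 y] by simp
lemma vge_Omul: "0 \<le> v x \<Longrightarrow> r \<le> v y \<Longrightarrow> r \<le> v (x * y)"
  using vge_mul[of 0 x r y] by simp


lemma D0[simp]: "D 0 = 0" using Dadd[of 0 0] by (metis add_cancel_right_right)
lemma Dneg: "D (- a) = - D a"
proof -
  have "D a + D (-a) = 0" using Dadd[of a "-a"] by simp
  thus ?thesis by (metis minus_unique)
qed
lemma Ddiff: "D (a - b) = D a - D b" using Dadd[of a "-b"] Dneg[of b] by simp
lemma Diter_add: "(D ^^ i) (a + b) = (D ^^ i) a + (D ^^ i) b"
  by (induction i) (auto simp: Dadd)
lemma Diter_diff: "(D ^^ i) (a - b) = (D ^^ i) a - (D ^^ i) b"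
  by (induction i) (auto simp: Ddiff)
lemma vDiter: "v a \<le> v ((D ^^ i) a)"
  by (induction i) (auto intro: order_trans vD)

lemma DT: assumes t: "v t < v (D t)" and u: "0 \<le> v u"
  shows "v t < v ((D ^^ i) (t * u) - t * (D ^^ i) u)"
proof (induction i)
  case 0
  have "t \<noteq> 0" using t by auto
  then show ?case by (cases "v t") auto
next
  case (Suc i)
  define w where "w = (D ^^ i) u"
  have w: "0 \<le> v w" unfolding w_def using u vDiter[of u i] by simp
  have Dw: "0 \<le> v (D w)" using w vD[of w] by simp
  have eq: "(D ^^ Suc i) (t * u) - t * (D ^^ Suc i) u
     = D ((D ^^ i) (t * u) - t * w) + (w * D t + e * D t * D w)"
    by (simp add: w_def Ddiff Dmul algebra_simps)
  have 1: "v t < v (D ((D ^^ i) (t * u) - t * w))"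
    using Suc vD unfolding w_def by (meson order_less_le_trans)
  have 2: "v t < v (w * D t)"
    using vge_Omul[OF w order_refl] t vmul by (metis order_less_le_trans)
  have "v (D t) \<le> v (e * D t * D w)"
    using vge_Omul[OF e0 order_refl, of "D t"] vge_mulO[OF _ Dw] by blast
  hence 3: "v t < v (e * D t * D w)" using t by simp
  show ?case unfolding eq by (intro vgt_add 1 2 3)
qed

end

definition mon :: "nat \<Rightarrow> (nat \<Rightarrow> nat) \<Rightarrow> (nat \<Rightarrow> 'a::field) \<Rightarrow> 'a" where
  "mon n m x = (\<Prod>i\<le>n. x i ^ m i)"

lemma eval_superset: "finite S \<Longrightarrow> {m. f m \<noteq> 0} \<subseteq> S \<Longrightarrow>
   mpoly_eval n f x = (\<Sum>m\<in>S. f m * mon n m x)"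
  unfolding mpoly_eval_def mon_def by (rule sum.mono_neutral_left) auto

context vdf begin

lemma prod_diff: "0 \<le> r \<Longrightarrow> (\<And>i. i \<in> I \<Longrightarrow> 0 \<le> v (a i) \<and> 0 \<le> v (b i) \<and> r \<le> v (a i - b i))
   \<Longrightarrow> r \<le> v (prod a I - prod b I)"
proof (induction I rule: infinite_finite_induct)
  case (insert x F)
  have eq: "prod a (insert x F) - prod b (insert x F) = a x * (prod a F - prod b F) + (a x - b x) * prod b F"
    using insert by (simp add: algebra_simps)
  have "0 \<le> v (prod b F)" using insert by (auto intro: vprod_ge0)
  then show ?case unfolding eq using insert
    by (intro vge_add vge_Omul vge_mulO) auto
qed auto

lemma pow_diff: "0 \<le> r \<Longrightarrow> 0 \<le> v a \<Longrightarrow> 0 \<le> v b \<Longrightarrow> r \<le> v (a - b) \<Longrightarrow> r \<le> v (a ^ k - b ^ k)"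
  using prod_diff[of r "{..<k}" "\<lambda>_. a" "\<lambda>_. b"] by simp

lemma eval_diff:
  assumes fin: "finite {m. g m \<noteq> 0}" and g: "\<And>m. 0 \<le> v (g m)" and r: "0 \<le> r"
    and x: "\<And>i. i \<le> n \<Longrightarrow> 0 \<le> v (x i) \<and> 0 \<le> v (x' i) \<and> r \<le> v (x' i - x i)"
  shows "r \<le> v (mpoly_eval n g x' - mpoly_eval n g x)"
proof -
  have "mpoly_eval n g x' - mpoly_eval n g x = (\<Sum>m\<in>{m. g m \<noteq> 0}. g m * (mon n m x' - mon n m x))"
    unfolding eval_superset[OF fin order_refl] by (simp add: sum_subtractf right_diff_distrib)
  also have "r \<le> v \<dots>"
  proof (rule vge_sum)
    fix m
    have "r \<le> v (mon n m x' - mon n m x)" unfolding mon_def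
    proof (rule prod_diff[OF r])
      fix i assume "i \<in> {..n}"
      then have "0 \<le> v (x i) \<and> 0 \<le> v (x' i) \<and> r \<le> v (x' i - x i)" using x by auto
      then show "0 \<le> v (x' i ^ m i) \<and> 0 \<le> v (x i ^ m i) \<and> r \<le> v (x' i ^ m i - x i ^ m i)"
        using r by (auto intro: pow_diff vpow_ge0)
    qed
    then show "r \<le> v (g m * (mon n m x' - mon n m x))" using g by (intro vge_Omul) auto
  qed
  finally show ?thesis .
qed


lemma vge_2: "0 \<le> (r::'g extended) \<Longrightarrow> r + r \<le> r + (r + r)"
  by (metis add.commute ext_add_nonneg)

lemma pow_taylor:
  assumes r: "0 \<le> r" and x: "0 \<le> v x" and y: "r \<le> v y"
  shows "r + r \<le> v ((x + y) ^ m - x ^ m - of_nat m * x ^ (m - 1) * y)"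
proof (induction m)
  case 0 then show ?case by simp
next
  case (Suc m)
  define R where "R = (x + y) ^ m - x ^ m - of_nat m * x ^ (m - 1) * y"
  have eq: "(x + y) ^ Suc m - x ^ Suc m - of_nat (Suc m) * x ^ (Suc m - 1) * y
      = (x + y) * R + of_nat m * x ^ (m - 1) * y * y"
  proof (cases m)
    case 0 then show ?thesis by (simp add: R_def)
  next
    case (Suc k) then show ?thesis by (simp add: R_def algebra_simps)
  qed
  have y0: "0 \<le> v y" using r y by simp
  have xy: "0 \<le> v (x + y)" using x y0 by (intro vge_add)
  have 1: "r + r \<le> v ((x + y) * R)" using Suc xy unfolding R_def by (intro vge_Omul)
  have "r + r \<le> v (of_nat m * x ^ (m - 1) * y * y)"
    using y x by (intro vge_mul vge_Omul vge_mul0 vnat_ge0 vpow_ge0) auto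
  then show ?case unfolding eq using 1 by (intro vge_add)
qed

lemma mon_taylor:
  assumes fin: "finite I" and r: "0 \<le> r"
    and xy: "\<And>i. i \<in> I \<Longrightarrow> 0 \<le> v (x i) \<and> r \<le> v (y i)"
  shows "r + r \<le> v ((\<Prod>i\<in>I. (x i + y i) ^ m i) - (\<Prod>i\<in>I. x i ^ m i)
      - (\<Sum>j\<in>I. of_nat (m j) * x j ^ (m j - 1) * y j * (\<Prod>k\<in>I - {j}. x k ^ m k)))"
  using fin xy
proof (induction I rule: finite_induct)
  case empty then show ?case by simp
next
  case (insert j F)
  define A' where "A' = (x j + y j) ^ m j"
  define a where "a = x j ^ m j"
  define \<alpha> where "\<alpha> = of_nat (m j) * x j ^ (m j - 1) * y j"
  define P' where "P' = (\<Prod>i\<in>F. (x i + y i) ^ m i)"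
  define P where "P = (\<Prod>i\<in>F. x i ^ m i)"
  define \<beta> where "\<beta> = (\<Sum>k\<in>F. of_nat (m k) * x k ^ (m k - 1) * y k * (\<Prod>l\<in>F - {k}. x l ^ m l))"
  have xj: "0 \<le> v (x j)" and yj: "r \<le> v (y j)" using insert by auto
  have y0: "\<And>i. i \<in> insert j F \<Longrightarrow> 0 \<le> v (y i)" using insert r by (meson order_trans)
  have sumeq: "(\<Sum>k\<in>insert j F. of_nat (m k) * x k ^ (m k - 1) * y k * (\<Prod>l\<in>insert j F - {k}. x l ^ m l))
     = \<alpha> * P + a * \<beta>"
  proof -
    have "insert j F - {j} = F" using insert by auto
    moreover have "(\<Sum>k\<in>F. of_nat (m k) * x k ^ (m k - 1) * y k * (\<Prod>l\<in>insert j F - {k}. x l ^ m l))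
        = a * \<beta>"
    proof -
      have "\<And>k. k \<in> F \<Longrightarrow> (\<Prod>l\<in>insert j F - {k}. x l ^ m l) = a * (\<Prod>l\<in>F - {k}. x l ^ m l)"
      proof -
        fix k assume k: "k \<in> F"
        then have "insert j F - {k} = insert j (F - {k})" using insert by auto
        then show "(\<Prod>l\<in>insert j F - {k}. x l ^ m l) = a * (\<Prod>l\<in>F - {k}. x l ^ m l)"
          using insert by (simp add: a_def)
      qed
      then show ?thesis unfolding \<beta>_def sum_distrib_left
        by (intro sum.cong) (auto simp: algebra_simps)
    qed
    ultimately show ?thesis using insert by (simp add: \<alpha>_def P_def)
  qed
  have eq: "(\<Prod>i\<in>insert j F. (x i + y i) ^ m i) - (\<Prod>i\<in>insert j F. x i ^ m i)
      - (\<alpha> * P + a * \<beta>) = a * (P' - P - \<beta>) + \<alpha> * \<beta> + \<alpha> * (P' - P - \<beta>) + (A' - a - \<alpha>) * P'"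
    using insert by (simp add: A'_def a_def P'_def P_def algebra_simps)
  have IH: "r + r \<le> v (P' - P - \<beta>)" using insert unfolding P'_def P_def \<beta>_def by auto
  have a0: "0 \<le> v a" unfolding a_def using xj by (rule vpow_ge0)
  have P'0: "0 \<le> v P'" unfolding P'_def using insert y0
    by (intro vprod_ge0 vpow_ge0 vge_add) auto
  have \<alpha>r: "r \<le> v \<alpha>" unfolding \<alpha>_def using xj yj by (intro vge_Omul vge_mul0 vnat_ge0 vpow_ge0)
  have \<beta>r: "r \<le> v \<beta>" unfolding \<beta>_def using insert
    by (intro vge_sum vge_mulO vge_Omul vge_mul0 vnat_ge0 vpow_ge0 vprod_ge0) auto
  have R1: "r + r \<le> v (A' - a - \<alpha>)" unfolding A'_def a_def \<alpha>_def using r xj yj by (rule pow_taylor)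
  have t1: "r + r \<le> v (a * (P' - P - \<beta>))" using a0 IH by (rule vge_Omul)
  have t2: "r + r \<le> v (\<alpha> * \<beta>)" using \<alpha>r \<beta>r by (rule vge_mul)
  have "r + (r + r) \<le> v (\<alpha> * (P' - P - \<beta>))" using \<alpha>r IH by (rule vge_mul)
  hence t3: "r + r \<le> v (\<alpha> * (P' - P - \<beta>))" using vge_2[OF r] by (rule order_trans[rotated])
  have t4: "r + r \<le> v ((A' - a - \<alpha>) * P')" using R1 P'0 by (rule vge_mulO)
  show ?case unfolding sumeq eq using t1 t2 t3 t4 by (intro vge_add)
qed

end

lemma pderiv_fin:
  assumes fin: "finite {m. f m \<noteq> 0}"
  shows "finite {m. mpoly_pderiv j f m \<noteq> 0}"
proof -
  have "{m. mpoly_pderiv j f m \<noteq> 0} \<subseteq> (\<lambda>m. m(j := m j - 1)) ` {m. f m \<noteq> 0}"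
  proof
    fix m assume "m \<in> {m. mpoly_pderiv j f m \<noteq> 0}"
    then have "f (m(j := Suc (m j))) \<noteq> 0" by (auto simp: mpoly_pderiv_def)
    moreover have "m = (m(j := Suc (m j)))(j := (m(j := Suc (m j))) j - 1)" by auto
    ultimately show "m \<in> (\<lambda>m. m(j := m j - 1)) ` {m. f m \<noteq> 0}" by blast
  qed
  then show ?thesis using fin finite_surj by blast
qed

lemma pderiv_eval:
  assumes j: "j \<le> n" and fin: "finite {m. f m \<noteq> 0}"
  shows "mpoly_eval n (mpoly_pderiv j f) x = (\<Sum>m\<in>{m. f m \<noteq> 0}.
      f m * (of_nat (m j) * x j ^ (m j - 1) * (\<Prod>k\<in>{..n} - {j}. x k ^ m k)))"
proof -
  define T where "T = {m. f (m(j := Suc (m j))) \<noteq> 0}"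
  define S where "S = {m. f m \<noteq> 0 \<and> 0 < m j}"
  have TS: "T = (\<lambda>m. m(j := m j - 1)) ` S"
  proof (rule set_eqI, rule iffI)
    fix m assume "m \<in> T"
    moreover have "m = (m(j := Suc (m j)))(j := (m(j := Suc (m j))) j - 1)" by auto
    ultimately show "m \<in> (\<lambda>m. m(j := m j - 1)) ` S" unfolding T_def S_def
      by (intro image_eqI[where x="m(j := Suc (m j))"]) auto
  next
    fix m assume "m \<in> (\<lambda>m. m(j := m j - 1)) ` S"
    then obtain m' where "m' \<in> S" "m = m'(j := m' j - 1)" by auto
    moreover then have "m(j := Suc (m j)) = m'" unfolding S_def by auto
    ultimately show "m \<in> T" unfolding T_def S_def by auto
  qed
  have finT: "finite T" unfolding TS S_def using fin by auto
  have "mpoly_eval n (mpoly_pderiv j f) x = (\<Sum>m\<in>T. mpoly_pderiv j f m * mon n m x)"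
    by (rule eval_superset[OF finT]) (auto simp: T_def mpoly_pderiv_def)
  also have "\<dots> = (\<Sum>m\<in>S. f m * (of_nat (m j) * x j ^ (m j - 1) * (\<Prod>k\<in>{..n} - {j}. x k ^ m k)))"
  proof (rule sum.reindex_bij_witness[of _ "\<lambda>m. m(j := m j - 1)" "\<lambda>m. m(j := Suc (m j))"])
    fix m assume m: "m \<in> T"
    have pr: "(\<Prod>k\<in>{..n} - {j}. x k ^ (m(j := Suc (m j))) k) = (\<Prod>k\<in>{..n} - {j}. x k ^ m k)"
      by (intro prod.cong) auto
    have "mon n m x = x j ^ m j * (\<Prod>k\<in>{..n} - {j}. x k ^ m k)"
      unfolding mon_def using j by (simp add: prod.remove)
    then show "f (m(j := Suc (m j))) * (of_nat ((m(j := Suc (m j))) j) * x j ^ ((m(j := Suc (m j))) j - 1) *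
        (\<Prod>k\<in>{..n} - {j}. x k ^ (m(j := Suc (m j))) k)) = mpoly_pderiv j f m * mon n m x"
      unfolding pr by (simp add: mpoly_pderiv_def algebra_simps)
  qed (auto simp: T_def S_def)
  also have "\<dots> = (\<Sum>m\<in>{m. f m \<noteq> 0}. f m * (of_nat (m j) * x j ^ (m j - 1) * (\<Prod>k\<in>{..n} - {j}. x k ^ m k)))"
    by (rule sum.mono_neutral_left) (auto simp: S_def fin)
  finally show ?thesis .
qed

context vdf begin

lemma eval_taylor:
  assumes fin: "finite {m. f m \<noteq> 0}" and fO: "\<And>m. 0 \<le> v (f m)" and r: "0 \<le> r"
    and xy: "\<And>i. i \<le> n \<Longrightarrow> 0 \<le> v (x i) \<and> r \<le> v (y i)"
  shows "r + r \<le> v (mpoly_eval n f (\<lambda>i. x i + y i) - mpoly_eval n f x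
     - (\<Sum>j\<le>n. mpoly_eval n (mpoly_pderiv j f) x * y j))"
proof -
  let ?S = "{m. f m \<noteq> 0}"
  let ?L = "\<lambda>m j. of_nat (m j) * x j ^ (m j - 1) * y j * (\<Prod>k\<in>{..n} - {j}. x k ^ m k)"
  have "(\<Sum>j\<le>n. mpoly_eval n (mpoly_pderiv j f) x * y j)
      = (\<Sum>j\<le>n. \<Sum>m\<in>?S. f m * ?L m j)"
    by (intro sum.cong refl) (simp add: pderiv_eval[OF _ fin] sum_distrib_right sum_distrib_left mult_ac)
  also have "\<dots> = (\<Sum>m\<in>?S. f m * (\<Sum>j\<le>n. ?L m j))"
    by (subst sum.swap) (simp add: sum_distrib_left)
  finally have eq1: "(\<Sum>j\<le>n. mpoly_eval n (mpoly_pderiv j f) x * y j) = (\<Sum>m\<in>?S. f m * (\<Sum>j\<le>n. ?L m j))" .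
  have "mpoly_eval n f (\<lambda>i. x i + y i) - mpoly_eval n f x - (\<Sum>j\<le>n. mpoly_eval n (mpoly_pderiv j f) x * y j)
     = (\<Sum>m\<in>?S. f m * (mon n m (\<lambda>i. x i + y i) - mon n m x - (\<Sum>j\<le>n. ?L m j)))"
    unfolding eq1 eval_superset[OF fin order_refl] by (simp add: sum_subtractf right_diff_distrib)
  also have "r + r \<le> v \<dots>"
  proof (rule vge_sum)
    fix m
    have "r + r \<le> v (mon n m (\<lambda>i. x i + y i) - mon n m x - (\<Sum>j\<le>n. ?L m j))"
      unfolding mon_def using xy by (intro mon_taylor r) auto
    then show "r + r \<le> v (f m * (mon n m (\<lambda>i. x i + y i) - mon n m x - (\<Sum>j\<le>n. ?L m j)))"
      using fO by (intro vge_Omul) auto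
  qed
  finally show ?thesis .
qed


lemma eval_O: "finite {m. g m \<noteq> 0} \<Longrightarrow> (\<And>m. 0 \<le> v (g m)) \<Longrightarrow> (\<And>i. i \<le> n \<Longrightarrow> 0 \<le> v (x i))
  \<Longrightarrow> 0 \<le> v (mpoly_eval n g x)"
  unfolding mpoly_eval_def by (intro vge_sum vge_mul0 vprod_ge0 vpow_ge0) auto

lemma pderiv_O: "(\<And>m. 0 \<le> v (f m)) \<Longrightarrow> 0 \<le> v (mpoly_pderiv j f m)"
  unfolding mpoly_pderiv_def by (intro vge_mul0 vnat_ge0) auto

lemma vdiv: assumes "s \<noteq> 0" "v s = Fin z" shows "v (x / s) = v x - Fin z"
proof -
  have "v x = v (x / s * s)" using assms by simp
  also have "\<dots> = v (x / s) + v s" by (rule vmul)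
  also have "\<dots> = v (x / s) + Fin z" using assms by simp
  finally show ?thesis by (cases "v (x / s)") auto
qed

lemma vgt_mul: "Fin r \<le> v x \<Longrightarrow> Fin q < v y \<Longrightarrow> Fin (r + q) < v (x * y)"
  unfolding vmul by (cases "v x"; cases "v y") (auto intro: add_le_less_mono)

end

locale hens = vdf +
  fixes n :: nat and f :: "(nat \<Rightarrow> nat) \<Rightarrow> 'a::field" and b :: 'a and g :: "'g::linordered_ab_group_add" and i0 :: nat
  assumes fin: "finite {m. f m \<noteq> 0}" and fO: "\<And>m. 0 \<le> v (f m)" and vb: "0 \<le> v b"
    and gmin: "\<And>i. i \<le> n \<Longrightarrow> Fin g \<le> v (mpoly_eval n (mpoly_pderiv i f) (\<lambda>k. (D ^^ k) b))"
    and i0: "i0 \<le> n" and i0v: "v (mpoly_eval n (mpoly_pderiv i0 f) (\<lambda>k. (D ^^ k) b)) = Fin g"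
    and Fb: "Fin (g + g) < v (mpoly_eval n f (\<lambda>k. (D ^^ k) b))"
    and VDF2: "{v a | a. v a < v (D a)} = {v a | a. a \<noteq> 0}"
    and resid: "residue_linearly_D_closed v D"
    and sph: "spherically_complete v"
    and nozero: "\<And>a. mpoly_eval n f (\<lambda>k. (D ^^ k) a) = 0 \<Longrightarrow> \<not> Fin g < v (a - b)"
begin

definition F where "F a = mpoly_eval n f (\<lambda>k. (D ^^ k) a)"
definition P where "P i a = mpoly_eval n (mpoly_pderiv i f) (\<lambda>k. (D ^^ k) a)"
definition fv where "fv a = (case v (F a) of Fin z \<Rightarrow> z | _ \<Rightarrow> 0)"
definition vB where "vB a = vball v a (fv a - g)"

lemma XO: "0 \<le> v a \<Longrightarrow> 0 \<le> v ((D ^^ k) a)"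
  using vDiter[of a k] by simp

lemma PO: "0 \<le> v a \<Longrightarrow> 0 \<le> v (P i a)"
  unfolding P_def by (intro eval_O pderiv_fin fin pderiv_O fO XO) auto

lemma g0: "0 \<le> g"
  using PO[OF vb, of i0] i0v by (simp add: P_def zero_extended_def)

lemma Fbnz: "F b \<noteq> 0"
  using nozero[of b] g0 unfolding F_def by auto

definition fb where "fb = fv b"

lemma vFb: "v (F b) = Fin fb"
  using Fbnz unfolding fb_def fv_def by (cases "v (F b)") auto

lemma fbg: "g + g < fb" using Fb vFb unfolding F_def by simp

definition A where "A = {a. Fin (fb - g) \<le> v (a - b) \<and> Fin fb \<le> v (F a)}"

lemma bA: "b \<in> A" unfolding A_def using vFb by simp

lemma A_props:
  assumes "a \<in> A"
  shows "Fin g < v (a - b)" "0 \<le> v a" "F a \<noteq> 0" "v (F a) = Fin (fv a)" "fb \<le> fv a" "g + g < fv a"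
proof -
  have "g < fb - g" using fbg by (simp add: less_diff_eq)
  then have gg: "Fin g < Fin (fb - g)" by simp
  have "Fin (fb - g) \<le> v (a - b)" using assms unfolding A_def by simp
  then show 1: "Fin g < v (a - b)" using gg by (rule order_less_le_trans[rotated])
  have "0 \<le> v (a - b)" using 1 g0 by (metis less_eq_extended.simps(1) order.trans order_less_imp_le zero_extended_def)
  then have "0 \<le> v (b + (a - b))" using vb by (intro vge_add)
  then show "0 \<le> v a" by simp
  show 3: "F a \<noteq> 0" using nozero 1 unfolding F_def by auto
  show 4: "v (F a) = Fin (fv a)" using 3 unfolding fv_def by (cases "v (F a)") auto
  show "fb \<le> fv a" using assms 4 unfolding A_def by simp
  then show "g + g < fv a" using fbg by simp
qed

lemma A_P:
  assumes a: "a \<in> A"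
  shows "\<And>i. i \<le> n \<Longrightarrow> Fin g \<le> v (P i a)" and "v (P i0 a) = Fin g"
proof -
  have diff: "v (a - b) \<le> v (P i a - P i b)" for i
    unfolding P_def
  proof (rule eval_diff[OF pderiv_fin[OF fin] pderiv_O[OF fO]])
    show "0 \<le> v (a - b)" using A_props(1)[OF a] g0
      by (metis less_eq_extended.simps(1) order.trans order_less_imp_le zero_extended_def)
    fix k assume "k \<le> n"
    show "0 \<le> v ((D ^^ k) b) \<and> 0 \<le> v ((D ^^ k) a) \<and> v (a - b) \<le> v ((D ^^ k) a - (D ^^ k) b)"
      using XO[OF vb] XO[OF A_props(2)[OF a]] vDiter[of "a - b" k] by (simp add: Diter_diff)
  qed
  have gt: "Fin g < v (P i a - P i b)" for i using diff A_props(1)[OF a] by (meson order_less_le_trans)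
  have eq: "P i a = P i b + (P i a - P i b)" for i by simp
  show "Fin g \<le> v (P i a)" if "i \<le> n" for i
    using gmin[OF that] gt[of i] vge_add eq[of i] unfolding P_def
    by (metis order_less_imp_le)
  show "v (P i0 a) = Fin g"
    using vadd_eq[of "P i0 b" "P i0 a - P i0 b"] gt[of i0] i0v unfolding P_def by simp
qed


lemma Xadd: "(\<lambda>k. (D ^^ k) c) = (\<lambda>k. (D ^^ k) a + (D ^^ k) (c - a))"
  by (simp add: Diter_add[symmetric])

lemma fin_le: "(x::'g) \<le> y \<Longrightarrow> Fin x \<le> Fin y" by simp

lemma ball_mono:
  assumes a: "a \<in> A" and c: "c \<in> vB a"
  shows "c \<in> A" "vB c \<subseteq> vB a" "v (F a) \<le> v (F c)"
proof -
  define \<rho> where "\<rho> = Fin (fv a - g)"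
  have ca: "\<rho> \<le> v (c - a)" using c unfolding vB_def vball_def \<rho>_def by simp
  have fa: "g + g < fv a" using A_props[OF a] by simp
  have r0: "0 \<le> \<rho>" unfolding \<rho>_def zero_extended_def using fa g0
    by (simp add: less_diff_eq) (metis add_increasing2 less_le_not_le nle_le order_trans)
  have tay: "\<rho> + \<rho> \<le> v (F c - F a - (\<Sum>j\<le>n. P j a * (D ^^ j) (c - a)))"
    unfolding F_def P_def Xadd[of c a]
  proof (rule eval_taylor[OF fin fO r0])
    fix i assume "i \<le> n"
    show "0 \<le> v ((D ^^ i) a) \<and> \<rho> \<le> v ((D ^^ i) (c - a))"
      using XO[OF A_props(2)[OF a]] ca vDiter[of "c - a" i] by auto
  qed
  have rr: "Fin (fv a) \<le> \<rho> + \<rho>" unfolding \<rho>_def using fa by (simp add: le_diff_eq)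
  have sm: "Fin (fv a) \<le> v (\<Sum>j\<le>n. P j a * (D ^^ j) (c - a))"
  proof (rule vge_sum)
    fix j assume "j \<in> {..n}"
    then have "Fin g + \<rho> \<le> v (P j a * (D ^^ j) (c - a))"
      using A_P(1)[OF a] ca vDiter[of "c - a" j] by (intro vge_mul) auto
    then show "Fin (fv a) \<le> v (P j a * (D ^^ j) (c - a))" unfolding \<rho>_def by simp
  qed
  have "Fin (fv a) \<le> v ((F c - F a - (\<Sum>j\<le>n. P j a * (D ^^ j) (c - a))) + (\<Sum>j\<le>n. P j a * (D ^^ j) (c - a)) + F a)"
    using tay rr sm A_props(4)[OF a] by (intro vge_add) auto
  then have Fc: "Fin (fv a) \<le> v (F c)" by simp
  then show "v (F a) \<le> v (F c)" using A_props(4)[OF a] by simp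
  have "Fin (fb - g) \<le> \<rho>" unfolding \<rho>_def using A_props(5)[OF a] by simp
  then have "Fin (fb - g) \<le> v ((c - a) + (a - b))"
    using ca a unfolding A_def by (intro vge_add) auto
  moreover have "Fin fb \<le> v (F c)" using Fc A_props(5)[OF a] by (meson fin_le order_trans)
  ultimately show cA: "c \<in> A" unfolding A_def by simp
  have "fv a \<le> fv c" using Fc A_props(4)[OF cA] by simp
  then have rc: "\<rho> \<le> Fin (fv c - g)" unfolding \<rho>_def by simp
  show "vB c \<subseteq> vB a"
  proof
    fix x assume "x \<in> vB c"
    then have "\<rho> \<le> v (x - c)" using rc unfolding vB_def vball_def by auto
    then have "\<rho> \<le> v ((x - c) + (c - a))" using ca by (intro vge_add)
    then show "x \<in> vB a" unfolding vB_def vball_def \<rho>_def by simp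
  qed
qed


lemma val_exists:
  assumes a: "a \<in> A" shows "\<exists>t. t \<noteq> 0 \<and> v t = Fin (fv a - g) \<and> v t < v (D t)"
proof -
  have s: "P i0 a \<noteq> 0" "v (P i0 a) = Fin g" using A_P(2)[OF a] by auto
  have "v (F a / P i0 a) = Fin (fv a - g)" using vdiv[OF s] A_props(4)[OF a] by simp
  moreover have "F a / P i0 a \<noteq> 0" using s A_props(3)[OF a] by simp
  ultimately have "Fin (fv a - g) \<in> {v a | a. a \<noteq> 0}"
    unfolding mem_Collect_eq by (intro exI[of _ "F a / P i0 a"]) simp
  then have "Fin (fv a - g) \<in> {v a | a. v a < v (D a)}" using VDF2 by simp
  then obtain t where t: "v t = Fin (fv a - g)" "v t < v (D t)" by auto
  then have "t \<noteq> 0" by auto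
  with t show ?thesis by blast
qed

lemma improve:
  assumes a: "a \<in> A" shows "\<exists>a'. a' \<in> vB a \<and> v (F a) < v (F a')"
proof -
  define \<delta> where "\<delta> = fv a - g"
  have fa: "g + g < fv a" using A_props[OF a] by simp
  have dg: "g < \<delta>" unfolding \<delta>_def using fa by (simp add: less_diff_eq)
  have d0: "0 \<le> Fin \<delta>" using dg g0 unfolding zero_extended_def by simp
  obtain t where t: "t \<noteq> 0" "v t = Fin \<delta>" "v t < v (D t)" using val_exists[OF a] unfolding \<delta>_def by blast
  define s where "s = P i0 a"
  have s: "s \<noteq> 0" "v s = Fin g" using A_P(2)[OF a] unfolding s_def by auto
  define c where "c i = P i a / s" for i
  have vts: "v (t * s) = Fin (fv a)" using t s unfolding vmul \<delta>_def by simp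
  have ts0: "t * s \<noteq> 0" using t s by simp
  define d where "d = - F a / (t * s)"
  have vd: "v d = 0" unfolding d_def using vdiv[OF ts0 vts] A_props(4)[OF a]
    by (simp add: zero_extended_def)
  have c0: "0 \<le> v (c i)" if "i \<le> n" for i
    using A_P(1)[OF a that] vdiv[OF s, of "P i a"] unfolding c_def
    by (cases "v (P i a)") (auto simp: zero_extended_def)
  have ci0: "v (c i0) = 0" unfolding c_def s_def using s unfolding s_def by simp
  obtain u where u: "0 \<le> v u" "0 < v ((\<Sum>i\<le>n. c i * (D ^^ i) u) - d)"
    using resid[unfolded residue_linearly_D_closed_def, rule_format, of n c d] c0 ci0 vd i0 by auto
  define a' where "a' = a + t * u"
  have a'a: "a' - a = t * u" unfolding a'_def by simp
  have vtu: "Fin \<delta> \<le> v (t * u)" using vge_mulO[of "Fin \<delta>" t u] t u by simp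
  have inball: "a' \<in> vB a" unfolding vB_def vball_def using vtu a'a \<delta>_def by simp
  define y where "y j = (D ^^ j) (t * u)" for j
  have tay: "Fin \<delta> + Fin \<delta> \<le> v (F a' - F a - (\<Sum>j\<le>n. P j a * y j))"
    unfolding F_def P_def Xadd[of a' a] a'a y_def
  proof (rule eval_taylor[OF fin fO d0])
    fix i assume "i \<le> n"
    show "0 \<le> v ((D ^^ i) a) \<and> Fin \<delta> \<le> v ((D ^^ i) (t * u))"
      using XO[OF A_props(2)[OF a]] vtu vDiter[of "t * u" i] by auto
  qed
  have T1: "Fin (fv a) < v (F a' - F a - (\<Sum>j\<le>n. P j a * y j))"
  proof -
    have "Fin (fv a) < Fin \<delta> + Fin \<delta>" unfolding \<delta>_def using dg \<delta>_def by (simp add: less_diff_eq)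
    then show ?thesis using tay by (rule order_less_le_trans)
  qed
  have T2: "Fin (fv a) < v (\<Sum>j\<le>n. P j a * (y j - t * (D ^^ j) u))"
  proof (rule vgt_sum)
    fix j assume "j \<in> {..n}"
    then have "Fin (g + \<delta>) < v (P j a * (y j - t * (D ^^ j) u))"
      using A_P(1)[OF a] DT[OF t(3) u(1), of j] t(2) unfolding y_def by (intro vgt_mul) auto
    then show "Fin (fv a) < v (P j a * (y j - t * (D ^^ j) u))" unfolding \<delta>_def by simp
  qed simp
  have cs: "c j * s = P j a" for j unfolding c_def using s by simp
  have T3eq: "F a + (\<Sum>j\<le>n. P j a * (t * (D ^^ j) u)) = t * s * ((\<Sum>i\<le>n. c i * (D ^^ i) u) - d)"
  proof -
    have "t * s * d = - F a" unfolding d_def using ts0 by simp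
    moreover have "(\<Sum>j\<le>n. P j a * (t * (D ^^ j) u)) = t * s * (\<Sum>i\<le>n. c i * (D ^^ i) u)"
      unfolding sum_distrib_left by (intro sum.cong refl) (simp add: cs[symmetric] mult_ac)
    ultimately show ?thesis by (simp add: right_diff_distrib)
  qed
  have T3: "Fin (fv a) < v (F a + (\<Sum>j\<le>n. P j a * (t * (D ^^ j) u)))"
    unfolding T3eq using vgt_mul[of "fv a" "t * s" 0] vts u(2) by (simp add: zero_extended_def)
  have eqF: "F a' = (F a' - F a - (\<Sum>j\<le>n. P j a * y j)) + (\<Sum>j\<le>n. P j a * (y j - t * (D ^^ j) u))
       + (F a + (\<Sum>j\<le>n. P j a * (t * (D ^^ j) u)))"
    by (simp add: sum_subtractf right_diff_distrib)
  have "Fin (fv a) < v (F a')" by (subst eqF) (intro vgt_add T1 T2 T3)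
  then show ?thesis using inball A_props(4)[OF a] by auto
qed


lemma contradiction: False
proof -
  define \<F> where "\<F> = (\<lambda>a. - vB a) ` A"
  have "\<forall>C\<in>chains \<F>. \<exists>U\<in>\<F>. \<forall>X\<in>C. X \<subseteq> U"
  proof
    fix C assume C: "C \<in> chains \<F>"
    show "\<exists>U\<in>\<F>. \<forall>X\<in>C. X \<subseteq> U"
    proof (cases "C = {}")
      case True then show ?thesis using bA unfolding \<F>_def by auto
    next
      case False
      have CF: "C \<subseteq> \<F>" and ch: "\<forall>X\<in>C. \<forall>Y\<in>C. X \<subseteq> Y \<or> Y \<subseteq> X"
        using C unfolding chains_def chain_subset_def by auto
      define \<B> where "\<B> = uminus ` C"
      have "\<B> \<noteq> {}" using False unfolding \<B>_def by auto
      moreover have "\<forall>B\<in>\<B>. \<exists>c \<alpha>. B = vball v c \<alpha>"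
      proof
        fix B assume "B \<in> \<B>"
        then obtain X where X: "X \<in> C" "B = - X" unfolding \<B>_def by auto
        then obtain a1 where "X = - vB a1" using CF unfolding \<F>_def by auto
        then have "B = vball v a1 (fv a1 - g)" using X unfolding vB_def by simp
        then show "\<exists>c \<alpha>. B = vball v c \<alpha>" by blast
      qed
      moreover have "\<forall>B1\<in>\<B>. \<forall>B2\<in>\<B>. B1 \<subseteq> B2 \<or> B2 \<subseteq> B1"
      proof (intro ballI)
        fix B1 B2 assume "B1 \<in> \<B>" "B2 \<in> \<B>"
        then obtain X1 X2 where "X1 \<in> C" "X2 \<in> C" "B1 = - X1" "B2 = - X2" unfolding \<B>_def by blast
        then show "B1 \<subseteq> B2 \<or> B2 \<subseteq> B1" using ch by blast
      qed
      ultimately have "\<Inter>\<B> \<noteq> {}" using sph[unfolded spherically_complete_def, rule_format, of \<B>] by simp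
      then obtain c where c0: "c \<in> \<Inter>\<B>" by blast
      have c: "c \<in> vB a1" if "a1 \<in> A" "- vB a1 \<in> C" for a1
      proof -
        have "- (- vB a1) \<in> \<B>" unfolding \<B>_def using that(2) by (rule imageI)
        then show ?thesis using c0 by simp
      qed
      have CF': "\<exists>a1. a1 \<in> A \<and> X = - vB a1" if "X \<in> C" for X
        using that CF unfolding \<F>_def by blast
      obtain X0 where "X0 \<in> C" using False by blast
      then obtain a0 where a0: "a0 \<in> A" "X0 = - vB a0" using CF' by blast
      have "c \<in> vB a0" using c[OF a0(1)] \<open>X0 \<in> C\<close> a0(2) by simp
      then have cA: "c \<in> A" using ball_mono(1)[OF a0(1)] by blast
      have "\<forall>X\<in>C. X \<subseteq> - vB c"
      proof
        fix X assume X: "X \<in> C"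
        then obtain a1 where a1: "a1 \<in> A" "X = - vB a1" using CF' by blast
        have "c \<in> vB a1" using c[OF a1(1)] X a1(2) by simp
        then have "vB c \<subseteq> vB a1" by (rule ball_mono(2)[OF a1(1)])
        then show "X \<subseteq> - vB c" using a1(2) by blast
      qed
      moreover have "- vB c \<in> \<F>" unfolding \<F>_def using cA by (rule imageI)
      ultimately show ?thesis by blast
    qed
  qed
  from Zorn_Lemma2[OF this] obtain M where M: "M \<in> \<F>" "\<forall>X\<in>\<F>. M \<subseteq> X \<longrightarrow> X = M"
    by blast
  from M(1) obtain a where a: "a \<in> A" "M = - vB a" unfolding \<F>_def by blast
  obtain a' where a': "a' \<in> vB a" "v (F a) < v (F a')" using improve[OF a(1)] by blast
  have a'A: "a' \<in> A" and sub: "vB a' \<subseteq> vB a" using ball_mono[OF a(1) a'(1)] by auto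
  have "- vB a' \<in> \<F>" using a'A unfolding \<F>_def by auto
  moreover have "M \<subseteq> - vB a'" using sub a(2) by auto
  ultimately have "- vB a' = - vB a" using M(2) a(2) by blast
  then have eqB: "vB a' = vB a" by simp
  obtain t where t: "v t = Fin (fv a - g)" using val_exists[OF a(1)] by blast
  have "Fin (fv a - g) \<le> v (a' - a)" using a'(1) unfolding vB_def vball_def by simp
  then have "Fin (fv a - g) \<le> v ((a' - a) + t)" using t by (intro vge_add) auto
  then have "a' + t \<in> vB a" unfolding vB_def vball_def by (simp add: algebra_simps)
  then have "a' + t \<in> vB a'" using eqB by simp
  then have "Fin (fv a' - g) \<le> v t" unfolding vB_def vball_def by simp
  moreover have "fv a < fv a'" using a'(2) A_props(4)[OF a(1)] A_props(4)[OF a'A] by simp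
  ultimately show False using t by simp
qed

end

theorem theorem5:
  fixes v :: "'a::field \<Rightarrow> 'g::linordered_ab_group_add extended"
    and D :: "'a \<Rightarrow> 'a"
    and n :: nat
    and f :: "(nat \<Rightarrow> nat) \<Rightarrow> 'a"
    and b :: 'a
  assumes "VD_field v D"
    and "spherically_complete v"
    and "residue_linearly_D_closed v D"
    and "is_mpoly n f"
    and "\<forall>m. 0 \<le> v (f m)"
    and "0 \<le> v b"
    and "Min ((\<lambda>i. v (mpoly_eval n (mpoly_pderiv i f) (\<lambda>k. (D ^^ k) b))) ` {..n}) < Pinf"
    and "Min ((\<lambda>i. v (mpoly_eval n (mpoly_pderiv i f) (\<lambda>k. (D ^^ k) b))) ` {..n})
         + Min ((\<lambda>i. v (mpoly_eval n (mpoly_pderiv i f) (\<lambda>k. (D ^^ k) b))) ` {..n})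
         < v (mpoly_eval n f (\<lambda>k. (D ^^ k) b))"
  shows "\<exists>a. mpoly_eval n f (\<lambda>k. (D ^^ k) a) = 0 \<and>
             Min ((\<lambda>i. v (mpoly_eval n (mpoly_pderiv i f) (\<lambda>k. (D ^^ k) b))) ` {..n}) < v (a - b)"
proof (rule ccontr)
  assume H: "\<not> ?thesis"
  note VD = assms(1)[unfolded VD_field_def]
  obtain e where e: "0 \<le> v e" "\<And>a b. D (a * b) = a * D b + b * D a + e * D a * D b"
    using VD by blast
  interpret vdf v D e
    using VD e by unfold_locales auto
  define \<gamma> where "\<gamma> = Min ((\<lambda>i. v (mpoly_eval n (mpoly_pderiv i f) (\<lambda>k. (D ^^ k) b))) ` {..n})"
  have "\<gamma> \<in> (\<lambda>i. v (mpoly_eval n (mpoly_pderiv i f) (\<lambda>k. (D ^^ k) b))) ` {..n}"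
    unfolding \<gamma>_def by (intro Min_in) auto
  then obtain i0 where i0: "i0 \<le> n" "v (mpoly_eval n (mpoly_pderiv i0 f) (\<lambda>k. (D ^^ k) b)) = \<gamma>" by auto
  have gle: "\<And>i. i \<le> n \<Longrightarrow> \<gamma> \<le> v (mpoly_eval n (mpoly_pderiv i f) (\<lambda>k. (D ^^ k) b))"
    unfolding \<gamma>_def by (intro Min_le) auto
  obtain g where g: "\<gamma> = Fin g"
    using assms(7) i0(2) vnMinf unfolding \<gamma>_def[symmetric] by (cases \<gamma>) auto
  have VDF2: "{v a | a. v a < v (D a)} = {v a | a. a \<noteq> 0}" using VD by blast
  have fin: "finite {m. f m \<noteq> 0}" using assms(4) unfolding is_mpoly_def by blast
  have fO: "\<And>m. 0 \<le> v (f m)" using assms(5) by blast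
  have gmin: "\<And>i. i \<le> n \<Longrightarrow> Fin g \<le> v (mpoly_eval n (mpoly_pderiv i f) (\<lambda>k. (D ^^ k) b))"
    using gle g by simp
  have i0v: "v (mpoly_eval n (mpoly_pderiv i0 f) (\<lambda>k. (D ^^ k) b)) = Fin g" using i0 g by simp
  have Fb: "Fin (g + g) < v (mpoly_eval n f (\<lambda>k. (D ^^ k) b))"
    using assms(8) g unfolding \<gamma>_def[symmetric] by simp
  have nz: "\<And>a. mpoly_eval n f (\<lambda>k. (D ^^ k) a) = 0 \<Longrightarrow> \<not> Fin g < v (a - b)"
    using H g unfolding \<gamma>_def[symmetric] by blast
  interpret hens v D e n f b g i0
    by (rule hens.intro[OF vdf_axioms], unfold_locales)
       (fact fin fO assms(6) gmin i0(1) i0v Fb VDF2 assms(3) assms(2) nz)+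
  show False by (rule contradiction)
qed

end
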